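(* Let $\Gamma=M\mathbb{Z}^n$ be a lattice in $\mathbb{R}^n$ (or $\mathbb{C}^n$), where $M$ is an invertible real (or complex) $n\times n$ matrix, and let $A$ be a dilation matrix for $\Gamma$. Let $F_\Gamma=M([-\tfrac12,\tfrac12)^n)$ and $D=A(F_\Gamma)\cap\Gamma$. Then there exists a finite set $S\subset\Gamma$ such that every $x\in\Gamma$ satisfies exactly one of: (1) $x=\sum_{j=0}^{N}A^jd_j$ for some $N\ge0$ and $d_j\in D$; (2) $x=A^Ns+\sum_{j=0}^{N-1}A^jd_j$ for some $N\ge0$, $s\in S$, $d_j\in D$.
   Context: An integer dilation matrix is an $n\times n$ matrix with integer entries all of whose eigenvalues $\lambda$ satisfy $|\lambda|>1$. A matrix $A$ is a dilation matrix for $\Gamma=M\mathbb{Z}^n$ if $B=M^{-1}AM$ is an integer dilation matrix (so $A$ maps $\Gamma$ into itself with nontrivial cokernel). *)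

theory Defs
  imports "HOL-Analysis.Analysis"
begin

text \<open>Matrix powers for square matrices (Cartesian-product representation).\<close>
primrec matpow :: "'a::semiring_1^'n^'n \<Rightarrow> nat \<Rightarrow> 'a^'n^'n" where
  "matpow A 0 = mat 1"
| "matpow A (Suc k) = A ** matpow A k"

text \<open>Integer dilation matrix: integer entries, every (complex) eigenvalue has modulus > 1.\<close>
definition int_dilation :: "int^'n^'n \<Rightarrow> bool" where
  "int_dilation B \<longleftrightarrow>
     (\<forall>(c::complex) (v::complex^'n). v \<noteq> 0 \<and> map_matrix of_int B *v v = c *s v \<longrightarrow> 1 < cmod c)"

text \<open>The lattice M Z^n, over a real normed field (reals or complexes).\<close>
definition lattice :: "'a::real_normed_field^'n^'n \<Rightarrow> ('a^'n) set" where
  "lattice M = {M *v (\<chi> i. of_int (k i)) | k. True}"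

text \<open>A is a dilation matrix for Gamma = M Z^n: M^-1 A M is an integer dilation matrix.\<close>
definition dilation_for :: "'a::real_normed_field^'n^'n \<Rightarrow> 'a^'n^'n \<Rightarrow> bool" where
  "dilation_for M A \<longleftrightarrow>
     (\<exists>B. int_dilation B \<and> matrix_inv M ** A ** M = map_matrix of_int B)"

text \<open>Fundamental domain F_Gamma = M([-1/2,1/2)^n).\<close>
definition fund_dom :: "'a::real_normed_field^'n^'n \<Rightarrow> ('a^'n) set" where
  "fund_dom M = {M *v (\<chi> i. of_real (t i)) | t. \<forall>i. -1/2 \<le> t i \<and> t i < 1/2}"

end

theory Submission
  imports Defs "Jordan_Normal_Form.Spectral_Radius"
begin

no_notation vec_index (infixl "$" 100)
no_notation scalar_prod (infix "\<bullet>" 70)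

lemma cvec_eqI: "(\<And>i. x $ i = y $ i) \<Longrightarrow> x = y"
  by (simp add: Finite_Cartesian_Product.vec_eq_iff)

definition gN :: "nat \<Rightarrow> 'n::finite" where "gN = from_nat_into UNIV"
definition hN :: "'n::finite \<Rightarrow> nat" where "hN = inv_into {..<CARD('n)} gN"

lemma gN_bij: "bij_betw (gN :: nat \<Rightarrow> 'n::finite) {..<CARD('n)} UNIV"
  unfolding gN_def using bij_betw_from_nat_into_finite[of "UNIV::'n set"] by simp

lemma hN_lt[simp]: "hN (a::'n::finite) < CARD('n)"
  unfolding hN_def using gN_bij[where 'n='n]
  by (metis bij_betw_def inv_into_into lessThan_iff UNIV_I)

lemma gN_hN[simp]: "gN (hN (a::'n::finite)) = a"
  unfolding hN_def using gN_bij[where 'n='n]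
  by (metis bij_betw_def f_inv_into_f UNIV_I)

lemma hN_gN[simp]: "i < CARD('n::finite) \<Longrightarrow> hN (gN i :: 'n) = i"
  unfolding hN_def using gN_bij[where 'n='n]
  by (metis bij_betw_def inv_into_f_f lessThan_iff)

lemma sum_gN: "(\<Sum>a\<in>(UNIV::'n::finite set). f a) = (\<Sum>i<CARD('n). f (gN i))"
  using sum.reindex_bij_betw[OF gN_bij[where 'n='n], of f] by simp

definition tj :: "real^'n^'n \<Rightarrow> complex mat" where
  "tj X = Matrix.mat CARD('n::finite) CARD('n) (\<lambda>(i,j). complex_of_real (X $ gN i $ gN j))"

lemma tj_carrier: "tj (X::real^'n::finite^'n) \<in> carrier_mat CARD('n) CARD('n)"
  unfolding tj_def by simp

lemma tj_dim[simp]: "dim_row (tj (X::real^'n::finite^'n)) = CARD('n)" "dim_col (tj X) = CARD('n)"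
  unfolding tj_def by auto

lemma tj_mult: "tj ((X::real^'n::finite^'n) ** Y) = tj X * tj Y"
proof (rule eq_matI)
  fix i j assume ij: "i < dim_row (tj X * tj Y)" "j < dim_col (tj X * tj Y)"
  hence i: "i < CARD('n)" and j: "j < CARD('n)" by (auto simp: tj_def)
  have "(tj X * tj Y) $$ (i,j) = (\<Sum>k<CARD('n). complex_of_real (X $ gN i $ gN k) * complex_of_real (Y $ gN k $ gN j))"
    using i j by (simp add: tj_def scalar_prod_def row_def col_def lessThan_atLeast0)
  also have "\<dots> = complex_of_real (\<Sum>k\<in>UNIV. X $ gN i $ k * Y $ k $ gN j)"
    by (simp add: sum_gN)
  finally show "tj (X ** Y) $$ (i, j) = (tj X * tj Y) $$ (i, j)"
    using i j by (simp add: tj_def matrix_matrix_mult_def)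
qed (auto simp: tj_def)

lemma matpow_Suc_right: "matpow (X::'a::semiring_1^'n^'n) (Suc k) = matpow X k ** X"
  by (induction k) (simp_all add: matrix_mul_assoc)

lemma tj_one: "tj (Finite_Cartesian_Product.mat 1 :: real^'n::finite^'n) = 1\<^sub>m CARD('n)"
proof (rule eq_matI)
  fix i j assume "i < dim_row (1\<^sub>m CARD('n))" "j < dim_col (1\<^sub>m CARD('n))"
  hence i: "i < CARD('n)" and j: "j < CARD('n)" by auto
  have "(gN i = (gN j :: 'n)) = (i = j)" using i j hN_gN[OF i] hN_gN[OF j] by metis
  thus "tj (Finite_Cartesian_Product.mat 1 :: real^'n::finite^'n) $$ (i, j) = 1\<^sub>m CARD('n) $$ (i, j)"
    using i j by (simp add: tj_def Finite_Cartesian_Product.mat_def)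
qed (auto simp: tj_def)

lemma tj_pow: "tj (matpow (X::real^'n::finite^'n) k) = tj X ^\<^sub>m k"
proof (induction k)
  case 0 show ?case by (simp add: tj_one)
next
  case (Suc k) thus ?case by (simp del: matpow.simps add: matpow_Suc_right tj_mult)
qed

lemma eig_to:
  fixes X :: "real^'n::finite^'n"
  assumes "eigenvector (tj X) v \<mu>"
  shows "\<exists>w::complex^'n. w \<noteq> 0 \<and> map_matrix complex_of_real X *v w = \<mu> *s w"
proof -
  from assms have v: "v \<in> carrier_vec CARD('n)" and v0: "v \<noteq> 0\<^sub>v CARD('n)"
    and ev: "tj X *\<^sub>v v = \<mu> \<cdot>\<^sub>v v" unfolding eigenvector_def by auto
  define w :: "complex^'n" where "w = (\<chi> a. vec_index v (hN a))"
  have dv: "dim_vec v = CARD('n)" using v by auto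
  have "w \<noteq> 0"
  proof
    assume "w = 0"
    have "vec_index v i = 0" if i: "i < CARD('n)" for i
    proof -
      have "w $ gN i = 0" using \<open>w = 0\<close> by simp
      thus ?thesis using i by (simp add: w_def)
    qed
    hence "v = 0\<^sub>v CARD('n)" using dv by (intro eq_vecI) auto
    with v0 show False by simp
  qed
  moreover have "map_matrix complex_of_real X *v w = \<mu> *s w"
  proof (rule cvec_eqI)
    fix a :: 'n
    have "(map_matrix complex_of_real X *v w) $ a = (\<Sum>b\<in>UNIV. complex_of_real (X $ a $ b) * vec_index v (hN b))"
      by (simp add: matrix_vector_mult_def w_def)
    also have "\<dots> = (\<Sum>i<CARD('n). complex_of_real (X $ a $ gN i) * vec_index v i)"
      by (simp add: sum_gN)
    also have "\<dots> = vec_index (tj X *\<^sub>v v) (hN a)"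
      using dv by (simp add: tj_def mult_mat_vec_def scalar_prod_def row_def lessThan_atLeast0)
    also have "\<dots> = \<mu> * vec_index v (hN a)" using ev dv by simp
    finally show "(map_matrix complex_of_real X *v w) $ a = (\<mu> *s w) $ a"
      by (simp add: w_def)
  qed
  ultimately show ?thesis by blast
qed

lemma eig_from:
  fixes X :: "real^'n::finite^'n"
  assumes w0: "w \<noteq> 0" and ev: "map_matrix complex_of_real X *v w = \<mu> *s w"
  shows "eigenvalue (tj X) \<mu>"
proof -
  define v where "v = Matrix.vec CARD('n) (\<lambda>i. w $ gN i)"
  have v0: "v \<noteq> 0\<^sub>v CARD('n)"
  proof
    assume "v = 0\<^sub>v CARD('n)"
    have "w $ a = 0" for a
    proof -
      have "w $ a = vec_index v (hN a)" by (simp add: v_def)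
      also have "\<dots> = 0" using \<open>v = 0\<^sub>v CARD('n)\<close> by simp
      finally show ?thesis .
    qed
    with w0 show False by (simp add: Finite_Cartesian_Product.vec_eq_iff)
  qed
  moreover have eqn: "tj X *\<^sub>v v = \<mu> \<cdot>\<^sub>v v"
  proof (rule eq_vecI)
    fix i assume "i < dim_vec (\<mu> \<cdot>\<^sub>v v)"
    hence i: "i < CARD('n)" by (simp add: v_def)
    have "vec_index (tj X *\<^sub>v v) i = (\<Sum>j<CARD('n). complex_of_real (X $ gN i $ gN j) * w $ gN j)"
      using i by (simp add: tj_def mult_mat_vec_def scalar_prod_def row_def lessThan_atLeast0 v_def)
    also have "\<dots> = (map_matrix complex_of_real X *v w) $ gN i"
      by (simp add: matrix_vector_mult_def sum_gN)
    also have "\<dots> = \<mu> * w $ gN i" using ev by simp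
    finally show "vec_index (tj X *\<^sub>v v) i = vec_index (\<mu> \<cdot>\<^sub>v v) i"
      using i by (simp add: v_def)
  qed (simp add: v_def)
  moreover have carr: "v \<in> carrier_vec (dim_row (tj X))" by (simp add: v_def)
  have "eigenvector (tj X) v \<mu>" unfolding eigenvector_def using v0 eqn carr by simp
  thus ?thesis unfolding eigenvalue_def by (rule exI)
qed

lemma matpow_scaleR: "matpow (c *\<^sub>R (X::real^'n::finite^'n)) k = (c^k) *\<^sub>R matpow X k"
proof (induction k)
  case 0 show ?case by simp
next
  case (Suc k)
  show ?case unfolding matpow.simps Suc
    by (rule cvec_eqI, rule cvec_eqI) (simp add: matrix_matrix_mult_def sum_distrib_left algebra_simps)
qed

lemma map_scaleR_mult: "map_matrix complex_of_real (c *\<^sub>R (X::real^'n::finite^'n)) *v w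
   = complex_of_real c *s (map_matrix complex_of_real X *v w)"
  by (rule cvec_eqI) (simp add: matrix_vector_mult_def sum_distrib_left mult.assoc)

lemma decay:
  fixes C :: "real^'n::finite^'n"
  assumes ev: "\<And>\<mu> w. w \<noteq> 0 \<Longrightarrow> map_matrix complex_of_real C *v w = \<mu> *s w \<Longrightarrow> norm \<mu> < 1"
  shows "\<exists>c r. 0 < r \<and> r < 1 \<and> (\<forall>k a b. \<bar>matpow C k $ a $ b\<bar> \<le> c * r^k)"
proof -
  have n0: "CARD('n) > 0" by simp
  define \<rho> where "\<rho> = spectral_radius (tj C)"
  from spectral_radius_mem_max(1)[OF tj_carrier n0, of C]
  obtain \<mu>0 where "\<mu>0 \<in> spectrum (tj C)" and rho: "\<rho> = norm \<mu>0" unfolding \<rho>_def by auto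
  then obtain v where "eigenvector (tj C) v \<mu>0" unfolding spectrum_def eigenvalue_def by auto
  from eig_to[OF this] obtain w where "w \<noteq> 0" "map_matrix complex_of_real C *v w = \<mu>0 *s w" by blast
  from ev[OF this] rho have rho1: "\<rho> < 1" by simp
  have rho0: "\<rho> \<ge> 0" using rho by simp
  define r where "r = (1 + \<rho>) / 2"
  have r0: "r > 0" and r1: "r < 1" and rr: "\<rho> < r" using rho0 rho1 by (auto simp: r_def)
  define X where "X = (1/r) *\<^sub>R C"
  have "spectral_radius (tj X) \<in> norm ` spectrum (tj X)"
    by (rule spectral_radius_mem_max(1)[OF tj_carrier n0])
  then obtain \<mu> where mu: "\<mu> \<in> spectrum (tj X)" and srX: "spectral_radius (tj X) = norm \<mu>" by auto
  then obtain v where "eigenvector (tj X) v \<mu>" unfolding spectrum_def eigenvalue_def by auto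
  from eig_to[OF this] obtain w where w0: "w \<noteq> 0" and wX: "map_matrix complex_of_real X *v w = \<mu> *s w" by blast
  have rX: "r *\<^sub>R X = C" using r0 by (simp add: X_def)
  have "map_matrix complex_of_real C *v w = complex_of_real r *s (map_matrix complex_of_real X *v w)"
    using map_scaleR_mult[of r X w] unfolding rX .
  also have "\<dots> = complex_of_real r *s (\<mu> *s w)" unfolding wX ..
  also have "\<dots> = (complex_of_real r * \<mu>) *s w" by (rule vector_smult_assoc)
  finally have "eigenvalue (tj C) (complex_of_real r * \<mu>)" by (rule eig_from[OF w0])
  hence "complex_of_real r * \<mu> \<in> spectrum (tj C)" unfolding spectrum_def by simp
  hence "norm (complex_of_real r * \<mu>) \<in> norm ` spectrum (tj C)" by (rule imageI)
  from spectral_radius_mem_max(2)[OF tj_carrier n0 this] have "r * norm \<mu> \<le> \<rho>"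
    using r0 by (simp add: \<rho>_def norm_mult)
  hence "r * norm \<mu> < r * 1" using rr by simp
  hence "norm \<mu> < 1" using r0 by (simp only: mult_less_cancel_left_pos)
  hence "spectral_radius (tj X) < 1" using srX by simp
  from spectral_radius_jnf_norm_bound_less_1_upper_triangular[OF tj_carrier this]
  obtain c where c: "\<And>k. norm_bound (tj X ^\<^sub>m k) c" by blast
  have "\<bar>matpow C k $ a $ b\<bar> \<le> c * r^k" for k a b
  proof -
    have "norm ((tj X ^\<^sub>m k) $$ (hN a, hN b)) \<le> c"
      using c[of k] hN_lt[of a] hN_lt[of b] unfolding norm_bound_def tj_pow[symmetric] tj_dim by blast
    also have "(tj X ^\<^sub>m k) $$ (hN a, hN b) = complex_of_real (matpow X k $ a $ b)"
      unfolding tj_pow[symmetric] by (simp add: tj_def)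
    finally have "\<bar>matpow X k $ a $ b\<bar> \<le> c"
      by (simp only: norm_of_real)
    moreover have "matpow X k $ a $ b = (1/r)^k * matpow C k $ a $ b" by (simp add: X_def matpow_scaleR)
    ultimately have "\<bar>(1/r)^k * matpow C k $ a $ b\<bar> \<le> c" by simp
    hence "\<bar>matpow C k $ a $ b\<bar> / r^k \<le> c" using r0 by (simp add: abs_mult power_divide)
    thus ?thesis using r0 by (simp add: divide_le_eq mult.commute)
  qed
  thus ?thesis using r0 r1 by blast
qed



lemma funpow_fix: "f z = z \<Longrightarrow> (f^^n) z = z"
  by (induction n) auto

lemma funpow_app: "(f^^m) ((f^^n) x) = (f^^(m+n)) x"
  by (simp add: funpow_add)

lemma funpow_period: "(f^^p) x = x \<Longrightarrow> (f^^(p*m)) x = x"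
proof (induction m)
  case 0 show ?case by simp
next
  case (Suc m)
  have "(f^^(p * Suc m)) x = (f^^p) ((f^^(p*m)) x)" by (simp add: funpow_app)
  also have "\<dots> = x" using Suc by simp
  finally show ?case .
qed

lemma orbit_dichotomy:
  fixes f :: "'b \<Rightarrow> 'b"
  assumes fin: "finite F" and ev: "\<And>x. \<exists>m0. \<forall>m\<ge>m0. (f^^m) x \<in> F" and fz: "f z = z"
  defines "P \<equiv> {x. \<exists>p>0. (f^^p) x = x} - {z}"
  shows "finite P" and "(\<exists>a. (f^^a) x = z) \<noteq> (\<exists>N. (f^^N) x \<in> P)"
proof -
  have PF: "P \<subseteq> F"
  proof
    fix x assume "x \<in> P"
    then obtain p where p: "p > 0" "(f^^p) x = x" unfolding P_def by auto
    obtain m0 where m0: "\<forall>m\<ge>m0. (f^^m) x \<in> F" using ev by blast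
    have "p * m0 \<ge> m0" using p by simp
    hence "(f^^(p*m0)) x \<in> F" using m0 by blast
    thus "x \<in> F" using funpow_period[OF p(2)] by simp
  qed
  thus "finite P" using fin finite_subset by blast
  show "(\<exists>a. (f^^a) x = z) \<noteq> (\<exists>N. (f^^N) x \<in> P)"
  proof (cases "\<exists>a. (f^^a) x = z")
    case True
    then obtain a where a: "(f^^a) x = z" by blast
    have "\<not> (f^^N) x \<in> P" for N
    proof
      assume "(f^^N) x \<in> P"
      then obtain p where p: "p > 0" "(f^^p) ((f^^N) x) = (f^^N) x" and nz: "(f^^N) x \<noteq> z"
        unfolding P_def by auto
      let ?s = "(f^^N) x"
      have "(f^^a) ?s = (f^^N) ((f^^a) x)" by (simp add: funpow_app add.commute)
      also have "\<dots> = z" using a funpow_fix[of f z, OF fz] by simp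
      finally have sa: "(f^^a) ?s = z" .
      have "p * a \<ge> a" using p by simp
      then have "(f^^(p*a)) ?s = (f^^(p*a - a)) ((f^^a) ?s)"
        by (simp add: funpow_app)
      also have "\<dots> = z" using sa funpow_fix[of f z, OF fz] by simp
      finally show False using funpow_period[OF p(2)] nz by simp
    qed
    thus ?thesis using True by blast
  next
    case False
    obtain m0 where m0: "\<forall>m\<ge>m0. (f^^m) x \<in> F" using ev by blast
    let ?I = "{m0..m0 + card F}"
    have "(\<lambda>m. (f^^m) x) ` ?I \<subseteq> F" using m0 by auto
    hence "card ((\<lambda>m. (f^^m) x) ` ?I) \<le> card F" using fin card_mono by blast
    hence "\<not> inj_on (\<lambda>m. (f^^m) x) ?I" using card_image by fastforce
    then obtain a b where ab: "a \<in> ?I" "b \<in> ?I" "a \<noteq> b" "(f^^a) x = (f^^b) x"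
      unfolding inj_on_def by blast
    then obtain a b where ab: "a < b" "(f^^a) x = (f^^b) x"
      by (metis linorder_neqE_nat)
    let ?y = "(f^^a) x"
    have "(f^^(b-a)) ?y = (f^^(b-a+a)) x" by (rule funpow_app)
    hence "(f^^(b-a)) ?y = (f^^b) x" using ab by simp
    hence per: "(f^^(b-a)) ?y = ?y" using ab by simp
    have "?y \<noteq> z" using False by blast
    moreover have "b - a > 0" using ab by simp
    ultimately have "?y \<in> P" unfolding P_def using per by blast
    thus ?thesis using False by blast
  qed
qed



lemma minv: "invertible (A::'a::semiring_1^'n::finite^'n) \<Longrightarrow>
  A ** matrix_inv A = Finite_Cartesian_Product.mat 1 \<and> matrix_inv A ** A = Finite_Cartesian_Product.mat 1"
  unfolding invertible_def matrix_inv_def by (rule someI_ex)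

lemma mv_smult: "(A::'a::comm_ring_1^'n::finite^'m::finite) *v (c *s v) = c *s (A *v v)"
  by (rule cvec_eqI) (simp add: matrix_vector_mult_def sum_distrib_left algebra_simps)

lemma mv_sum_fin: "finite S \<Longrightarrow> (A::'a::comm_ring_1^'n::finite^'m::finite) *v sum f S = (\<Sum>x\<in>S. A *v f x)"
  by (induction S rule: finite_induct) (simp_all add: matrix_vector_right_distrib)

lemma mv_sum: "(A::'a::comm_ring_1^'n::finite^'m::finite) *v sum f S = (\<Sum>x\<in>S. A *v f x)"
  by (cases "finite S") (simp_all add: mv_sum_fin)

lemma norm_mv: "norm ((X::real^'n::finite^'m::finite) *v v) \<le> (\<Sum>a\<in>UNIV. \<Sum>b\<in>UNIV. \<bar>X$a$b\<bar>) * norm v"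
proof -
  have "norm (X *v v) \<le> (\<Sum>a\<in>UNIV. \<bar>(X *v v)$a\<bar>)" by (rule norm_le_l1_cart)
  also have "\<dots> \<le> (\<Sum>a\<in>UNIV. (\<Sum>b\<in>UNIV. \<bar>X$a$b\<bar>) * norm v)"
  proof (rule sum_mono)
    fix a
    have "\<bar>(X *v v)$a\<bar> \<le> (\<Sum>b\<in>UNIV. \<bar>X$a$b * v$b\<bar>)"
      unfolding matrix_vector_mult_def by (simp add: sum_abs)
    also have "\<dots> \<le> (\<Sum>b\<in>UNIV. \<bar>X$a$b\<bar> * norm v)"
      by (rule sum_mono) (simp add: abs_mult mult_left_mono component_le_norm_cart)
    finally show "\<bar>(X *v v)$a\<bar> \<le> (\<Sum>b\<in>UNIV. \<bar>X$a$b\<bar>) * norm v" by (simp add: sum_distrib_right)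
  qed
  finally show ?thesis by (simp add: sum_distrib_right)
qed

lemma finite_int_vecs: "finite S \<Longrightarrow> finite {k::'b^'n::finite. \<forall>i. k$i \<in> S}"
proof -
  assume S: "finite S"
  have "{k::'b^'n. \<forall>i. k$i \<in> S} \<subseteq> vec_lambda ` (PiE UNIV (\<lambda>_. S))"
  proof
    fix k :: "'b^'n" assume "k \<in> {k. \<forall>i. k$i \<in> S}"
    hence "vec_nth k \<in> PiE UNIV (\<lambda>_. S)" by auto
    moreover have "k = vec_lambda (vec_nth k)" by simp
    ultimately show "k \<in> vec_lambda ` (PiE UNIV (\<lambda>_. S))" by blast
  qed
  moreover have "finite (vec_lambda ` (PiE (UNIV::'n set) (\<lambda>_. S)))"
    using S by (intro finite_imageI finite_PiE) auto
  ultimately show ?thesis using finite_subset by blast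
qed

definition rv :: "int^'n::finite \<Rightarrow> real^'n" where "rv k = (\<chi> i. real_of_int (k$i))"

lemma rv_add: "rv (a + b) = rv a + rv b" by (rule cvec_eqI) (simp add: rv_def)
lemma rv_diff: "rv (a - b) = rv a - rv b" by (rule cvec_eqI) (simp add: rv_def)
lemma rv_0: "rv 0 = 0" by (rule cvec_eqI) (simp add: rv_def)
lemma rv_mv: "rv ((B::int^'n::finite^'m::finite) *v m) = map_matrix real_of_int B *v rv m"
  by (rule cvec_eqI) (simp add: rv_def matrix_vector_mult_def)
lemma rv_inj: "rv a = rv b \<Longrightarrow> a = b"
  by (simp add: rv_def Finite_Cartesian_Product.vec_eq_iff)

locale digsys =
  fixes B :: "int^'n::finite^'n"
  assumes dil: "int_dilation B"
begin

definition "Br = map_matrix real_of_int B"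
definition "Dz = {d. \<exists>t::real^'n. (\<forall>i. -1/2 \<le> t$i \<and> t$i < 1/2) \<and> Br *v t = rv d}"
definition "C = matrix_inv Br"

lemma Br_ker: "Br *v t = 0 \<Longrightarrow> t = 0"
proof (rule ccontr)
  assume bt: "Br *v t = 0" and t0: "t \<noteq> 0"
  define w :: "complex^'n" where "w = (\<chi> i. complex_of_real (t$i))"
  have "w \<noteq> 0" using t0 by (auto simp: w_def Finite_Cartesian_Product.vec_eq_iff)
  moreover have "map_matrix of_int B *v w = 0 *s w"
  proof (rule cvec_eqI)
    fix i
    have "(map_matrix of_int B *v w) $ i = complex_of_real ((Br *v t) $ i)"
      by (simp add: matrix_vector_mult_def w_def Br_def)
    thus "(map_matrix of_int B *v w) $ i = (0 *s w) $ i" using bt by simp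
  qed
  ultimately have "1 < cmod 0" using dil unfolding int_dilation_def by blast
  thus False by simp
qed

lemma Br_inv: "Br ** C = Finite_Cartesian_Product.mat 1" "C ** Br = Finite_Cartesian_Product.mat 1"
proof -
  have "\<exists>X. X ** Br = Finite_Cartesian_Product.mat 1"
    using Br_ker matrix_left_invertible_ker by blast
  hence "invertible Br" using invertible_left_inverse by blast
  from minv[OF this] show "Br ** C = Finite_Cartesian_Product.mat 1" "C ** Br = Finite_Cartesian_Product.mat 1"
    unfolding C_def by auto
qed

lemma C_ev:
  assumes w0: "w \<noteq> 0" and ev: "map_matrix complex_of_real C *v w = \<mu> *s w"
  shows "norm \<mu> < 1"
proof -
  define Bc :: "complex^'n^'n" where "Bc = map_matrix of_int B"
  have BC: "Bc ** map_matrix complex_of_real C = Finite_Cartesian_Product.mat 1"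
  proof -
    have "Bc ** map_matrix complex_of_real C = map_matrix complex_of_real (Br ** C)"
      by (rule cvec_eqI, rule cvec_eqI) (simp add: Bc_def Br_def matrix_matrix_mult_def)
    also have "\<dots> = Finite_Cartesian_Product.mat 1" using Br_inv(1)
      by (intro cvec_eqI) (simp add: Finite_Cartesian_Product.mat_def Finite_Cartesian_Product.vec_eq_iff)
    finally show ?thesis .
  qed
  have "w = Bc *v (map_matrix complex_of_real C *v w)"
    by (simp add: matrix_vector_mul_assoc BC)
  also have "\<dots> = \<mu> *s (Bc *v w)" using ev by (simp add: mv_smult)
  finally have wm: "w = \<mu> *s (Bc *v w)" .
  have mu0: "\<mu> \<noteq> 0" using wm w0 by auto
  have "Bc *v w = (1/\<mu>) *s w" using wm mu0
    by (metis (no_types, lifting) divide_self_if mult.commute nonzero_divide_eq_eq vector_smult_assoc vector_smult_lid)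
  hence "1 < cmod (1/\<mu>)" using dil w0 unfolding int_dilation_def Bc_def by blast
  thus ?thesis using mu0 by (simp add: norm_divide divide_less_eq)
qed

lemma zero_Dz: "0 \<in> Dz"
  unfolding Dz_def by (auto intro!: exI[of _ 0] simp: rv_0)

lemma Br_rv: "rv (B *v m) = Br *v rv m"
  by (simp add: rv_mv Br_def)

lemma digit_exists: "\<exists>d m. d \<in> Dz \<and> k = d + B *v m"
proof -
  define t0 where "t0 = C *v rv k"
  define m :: "int^'n" where "m = (\<chi> i. \<lfloor>t0$i + 1/2\<rfloor>)"
  define t where "t = t0 - rv m"
  define d where "d = k - B *v m"
  have "Br *v t = Br *v t0 - Br *v rv m" by (simp add: t_def matrix_vector_mult_diff_distrib)
  also have "\<dots> = rv k - rv (B *v m)"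
    by (simp add: t0_def matrix_vector_mul_assoc Br_inv Br_rv)
  also have "\<dots> = rv d" by (simp add: d_def rv_diff)
  finally have 1: "Br *v t = rv d" .
  have 2: "-1/2 \<le> t$i \<and> t$i < 1/2" for i
  proof -
    have "of_int \<lfloor>t0$i + 1/2\<rfloor> \<le> t0$i + 1/2" "t0$i + 1/2 < of_int \<lfloor>t0$i + 1/2\<rfloor> + 1"
      by linarith+
    moreover have "t$i = t0$i - of_int \<lfloor>t0$i + 1/2\<rfloor>" by (simp add: t_def m_def rv_def)
    ultimately show ?thesis by linarith
  qed
  have "d \<in> Dz" unfolding Dz_def using 1 2 by blast
  moreover have "k = d + B *v m" by (simp add: d_def)
  ultimately show ?thesis by blast
qed

lemma digit_unique:
  assumes "d1 \<in> Dz" "d2 \<in> Dz" "d1 + B *v m1 = d2 + B *v m2"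
  shows "m1 = m2"
proof -
  obtain t1 where t1: "\<forall>i. -1/2 \<le> t1$i \<and> t1$i < 1/2" "Br *v t1 = rv d1" using assms(1) unfolding Dz_def by blast
  obtain t2 where t2: "\<forall>i. -1/2 \<le> t2$i \<and> t2$i < 1/2" "Br *v t2 = rv d2" using assms(2) unfolding Dz_def by blast
  have "d1 - d2 = B *v (m2 - m1)" using assms(3)
    by (simp add: matrix_vector_mult_diff_distrib algebra_simps)
  hence "Br *v (t1 - t2) = Br *v rv (m2 - m1)"
    by (simp add: matrix_vector_mult_diff_distrib t1 t2 rv_diff[symmetric] Br_rv[symmetric])
  hence "Br *v (t1 - t2 - rv (m2 - m1)) = 0" by (simp add: matrix_vector_mult_diff_distrib)
  hence "t1 - t2 - rv (m2 - m1) = 0" by (rule Br_ker)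
  hence eq: "t1 - t2 = rv (m2 - m1)" by simp
  show ?thesis
  proof (rule cvec_eqI)
    fix i
    have "real_of_int ((m2 - m1)$i) = t1$i - t2$i" using eq by (simp add: rv_def Finite_Cartesian_Product.vec_eq_iff)
    hence "\<bar>real_of_int ((m2 - m1)$i)\<bar> < 1" using t1(1)[rule_format, of i] t2(1)[rule_format, of i]
      by (simp add: abs_less_iff)
    hence "(m2 - m1)$i = 0" by linarith
    thus "m1 $ i = m2 $ i" by simp
  qed
qed

definition "dpair k = (SOME p. fst p \<in> Dz \<and> k = fst p + B *v snd p)"
definition "dig k = fst (dpair k)"
definition "Phi k = snd (dpair k)"

lemma dig_props: "dig k \<in> Dz" "k = dig k + B *v Phi k"
proof -
  have "\<exists>p. fst p \<in> Dz \<and> k = fst p + B *v snd p" using digit_exists by auto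
  from someI_ex[OF this] show "dig k \<in> Dz" "k = dig k + B *v Phi k"
    unfolding dig_def Phi_def dpair_def by auto
qed

lemma dig_unique: "d \<in> Dz \<Longrightarrow> k = d + B *v m \<Longrightarrow> dig k = d \<and> Phi k = m"
proof -
  assume d: "d \<in> Dz" and k: "k = d + B *v m"
  have e: "dig k + B *v Phi k = d + B *v m" by (metis dig_props(2) k)
  have "Phi k = m" using digit_unique[OF dig_props(1)[of k] d e] .
  moreover then have "dig k = d" using e by simp
  ultimately show ?thesis by simp
qed

lemma Phi_0: "Phi 0 = 0"
  using dig_unique[OF zero_Dz, of 0 0] by simp

end



context digsys
begin

lemma Phi_step: "\<exists>t. (\<forall>i. \<bar>t$i\<bar> \<le> 1/2) \<and> rv (Phi k) = C *v rv k - t"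
proof -
  obtain t where t: "\<forall>i. -1/2 \<le> t$i \<and> t$i < 1/2" "Br *v t = rv (dig k)"
    using dig_props(1)[of k] unfolding Dz_def by blast
  have "rv k = rv (dig k) + Br *v rv (Phi k)"
    by (metis dig_props(2) rv_add Br_rv)
  hence "C *v rv k = C *v (Br *v t) + C *v (Br *v rv (Phi k))"
    by (simp add: t(2) matrix_vector_right_distrib)
  also have "\<dots> = t + rv (Phi k)" by (simp add: matrix_vector_mul_assoc Br_inv)
  finally have "rv (Phi k) = C *v rv k - t" by simp
  moreover have "\<forall>i. \<bar>t$i\<bar> \<le> 1/2"
  proof
    fix i have "-1/2 \<le> t$i" "t$i < 1/2" using t(1) by auto
    thus "\<bar>t$i\<bar> \<le> 1/2" by (simp add: abs_le_iff)
  qed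
  ultimately show ?thesis by blast
qed

lemma orbit_bounded: "\<exists>R. \<forall>k. \<exists>m0. \<forall>m\<ge>m0. norm (rv ((Phi^^m) k)) \<le> R"
proof -
  have "\<exists>c r. 0 < r \<and> r < 1 \<and> (\<forall>k a b. \<bar>matpow C k $ a $ b\<bar> \<le> c * r^k)"
    by (rule decay, rule C_ev, assumption+)
  then obtain c r where r0: "0 < r" and r1: "r < 1" and cb: "\<And>k a b. \<bar>matpow C k $ a $ b\<bar> \<le> c * r^k"
    by blast
  have "\<bar>matpow C 0 $ undefined $ undefined\<bar> \<le> c" using cb[of 0 undefined undefined] by simp
  hence c0: "c \<ge> 0" using abs_ge_zero order_trans by blast
  define K where "K = real CARD('n) * real CARD('n) * c"
  have K0: "K \<ge> 0" using c0 by (simp add: K_def)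
  have nb: "norm (matpow C j *v v) \<le> K * r^j * norm v" for j v
  proof -
    have "norm (matpow C j *v v) \<le> (\<Sum>a\<in>UNIV. \<Sum>b\<in>UNIV. \<bar>matpow C j $a$b\<bar>) * norm v" by (rule norm_mv)
    also have "\<dots> \<le> (\<Sum>a\<in>(UNIV::'n set). \<Sum>b\<in>(UNIV::'n set). c * r^j) * norm v"
      by (intro mult_right_mono sum_mono cb) simp_all
    also have "\<dots> = K * r^j * norm v" by (simp add: K_def)
    finally show ?thesis .
  qed
  define T where "T = real CARD('n)"
  have tb: "norm t \<le> T" if "\<forall>i. \<bar>t$i\<bar> \<le> 1/2" for t :: "real^'n"
  proof -
    have "norm t \<le> (\<Sum>i\<in>UNIV. \<bar>t$i\<bar>)" by (rule norm_le_l1_cart)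
    also have "\<dots> \<le> (\<Sum>i\<in>(UNIV::'n set). 1)"
    proof (rule sum_mono)
      fix i show "\<bar>t$i\<bar> \<le> 1" using that[rule_format, of i] by linarith
    qed
    finally show ?thesis by (simp add: T_def)
  qed
  have claim: "\<forall>k. \<exists>u. rv ((Phi^^m) k) = matpow C m *v rv k - u \<and> norm u \<le> K * T * (\<Sum>j<m. r^j)" for m
  proof (induction m)
    case 0 show ?case by (simp add: rv_def)
  next
    case (Suc m)
    show ?case
    proof
      fix k
      obtain t where t: "\<forall>i. \<bar>t$i\<bar> \<le> 1/2" "rv (Phi k) = C *v rv k - t" using Phi_step by blast
      obtain u where u: "rv ((Phi^^m) (Phi k)) = matpow C m *v rv (Phi k) - u"
        "norm u \<le> K * T * (\<Sum>j<m. r^j)" using Suc by blast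
      have "rv ((Phi^^Suc m) k) = matpow C m *v (C *v rv k - t) - u"
        using u(1) t(2) by (simp add: funpow_Suc_right del: funpow.simps)
      also have "\<dots> = matpow C (Suc m) *v rv k - (matpow C m *v t + u)"
        by (simp add: matrix_vector_mult_diff_distrib matrix_vector_mul_assoc matpow_Suc_right del: matpow.simps)
      finally have e: "rv ((Phi^^Suc m) k) = matpow C (Suc m) *v rv k - (matpow C m *v t + u)" .
      have "norm (matpow C m *v t + u) \<le> norm (matpow C m *v t) + norm u" by (rule norm_triangle_ineq)
      also have "\<dots> \<le> K * r^m * T + K * T * (\<Sum>j<m. r^j)"
      proof -
        have "norm (matpow C m *v t) \<le> K * r^m * norm t" by (rule nb)
        also have "\<dots> \<le> K * r^m * T" using tb[OF t(1)] K0 r0 by (intro mult_left_mono) simp_all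
        finally show ?thesis using u(2) by linarith
      qed
      also have "\<dots> = K * T * (\<Sum>j<Suc m. r^j)" by (simp add: algebra_simps)
      finally show "\<exists>u. rv ((Phi^^Suc m) k) = matpow C (Suc m) *v rv k - u \<and> norm u \<le> K * T * (\<Sum>j<Suc m. r^j)"
        using e by blast
    qed
  qed
  define R where "R = 1 + K * T / (1 - r)"
  have geo: "(\<Sum>j<m. r^j) \<le> 1 / (1 - r)" for m
  proof -
    have "(\<Sum>j<m. r^j) = (1 - r^m) / (1 - r)" using r1 by (simp add: sum_gp_strict)
    also have "\<dots> \<le> 1 / (1 - r)" using r0 r1 by (intro divide_right_mono) simp_all
    finally show ?thesis .
  qed
  have "\<exists>m0. \<forall>m\<ge>m0. norm (rv ((Phi^^m) k)) \<le> R" for k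
  proof -
    have "(\<lambda>m. K * norm (rv k) * r^m) \<longlonglongrightarrow> 0"
      using r0 r1 by (intro tendsto_mult_right_zero LIMSEQ_power_zero) simp
    hence "eventually (\<lambda>m. K * norm (rv k) * r^m < 1) sequentially"
      by (rule order_tendstoD(2)) simp
    then obtain m0 where m0: "\<And>m. m \<ge> m0 \<Longrightarrow> K * norm (rv k) * r^m < 1"
      unfolding eventually_sequentially by blast
    have "norm (rv ((Phi^^m) k)) \<le> R" if "m \<ge> m0" for m
    proof -
      obtain u where u: "rv ((Phi^^m) k) = matpow C m *v rv k - u" "norm u \<le> K * T * (\<Sum>j<m. r^j)"
        using claim by blast
      have "norm (rv ((Phi^^m) k)) \<le> norm (matpow C m *v rv k) + norm u"
        unfolding u(1) by (rule norm_triangle_ineq4)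
      also have "\<dots> \<le> K * r^m * norm (rv k) + K * T * (1 / (1 - r))"
      proof -
        have "K * T * (\<Sum>j<m. r^j) \<le> K * T * (1 / (1 - r))"
          using K0 geo[of m] by (intro mult_left_mono) (simp_all add: T_def)
        thus ?thesis using nb[of m "rv k"] u(2) by linarith
      qed
      also have "\<dots> \<le> R" using m0[OF that] by (simp add: R_def algebra_simps)
      finally show ?thesis .
    qed
    thus ?thesis by blast
  qed
  thus ?thesis by blast
qed

lemma finite_ball: "finite {k. norm (rv k) \<le> R}"
proof -
  have "{k. norm (rv k) \<le> R} \<subseteq> {k. \<forall>i. k$i \<in> {-\<lceil>R\<rceil>..\<lceil>R\<rceil>}}"
  proof safe
    fix k i assume "norm (rv k) \<le> R"
    hence "\<bar>rv k $ i\<bar> \<le> R" by (meson component_le_norm_cart order_trans)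
    hence "\<bar>real_of_int (k$i)\<bar> \<le> of_int \<lceil>R\<rceil>" by (simp add: rv_def) (meson le_of_int_ceiling order_trans)
    hence "\<bar>k$i\<bar> \<le> \<lceil>R\<rceil>" by linarith
    hence "-\<lceil>R\<rceil> \<le> k$i" "k$i \<le> \<lceil>R\<rceil>" by (simp_all add: abs_le_iff)
    thus "k$i \<in> {-\<lceil>R\<rceil>..\<lceil>R\<rceil>}" by simp
  qed
  thus ?thesis using finite_int_vecs[of "{-\<lceil>R\<rceil>..\<lceil>R\<rceil>}"] finite_subset by blast
qed

lemma dichotomy: "\<exists>P. finite P \<and> (\<forall>k. (\<exists>a. (Phi^^a) k = 0) \<noteq> (\<exists>N. (Phi^^N) k \<in> P))"
proof -
  obtain R where R: "\<forall>k. \<exists>m0. \<forall>m\<ge>m0. norm (rv ((Phi^^m) k)) \<le> R" using orbit_bounded by blast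
  have ev: "\<exists>m0. \<forall>m\<ge>m0. (Phi^^m) k \<in> {k. norm (rv k) \<le> R}" for k using R by simp
  note od = orbit_dichotomy[where F="{k. norm (rv k) \<le> R}" and f=Phi and z=0, OF finite_ball ev Phi_0]
  show ?thesis using od by blast
qed

lemma mp_suc_mv: "matpow B (Suc j) *v v = B *v (matpow B j *v v)"
  by (simp add: matrix_vector_mul_assoc)

lemma expand1: "(\<forall>j<N. d j \<in> Dz) \<Longrightarrow> k = matpow B N *v s + (\<Sum>j<N. matpow B j *v d j) \<Longrightarrow> (Phi^^N) k = s"
proof (induction N arbitrary: k d)
  case 0 thus ?case by simp
next
  case (Suc N)
  define k' where "k' = matpow B N *v s + (\<Sum>j<N. matpow B j *v d (Suc j))"
  have "k = matpow B (Suc N) *v s + (d 0 + (\<Sum>j<N. matpow B (Suc j) *v d (Suc j)))"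
    unfolding Suc.prems(2) sum.lessThan_Suc_shift by (simp only: matpow.simps(1) matrix_vector_mul_lid)
  also have "\<dots> = d 0 + B *v k'"
    by (simp only: k'_def mp_suc_mv matrix_vector_right_distrib mv_sum add_ac)
  finally have "k = d 0 + B *v k'" .
  from dig_unique[OF _ this] Suc.prems(1) have "Phi k = k'" by simp
  moreover have "(Phi^^N) k' = s" using Suc.prems(1) by (intro Suc.IH[OF _ k'_def]) simp
  ultimately show ?case by (simp add: funpow_Suc_right del: funpow.simps)
qed

lemma expand2: "(Phi^^N) k = s \<Longrightarrow> k = matpow B N *v s + (\<Sum>j<N. matpow B j *v dig ((Phi^^j) k))"
proof (induction N arbitrary: k)
  case 0 thus ?case by simp
next
  case (Suc N)
  have "(Phi^^N) (Phi k) = s" using Suc.prems by (simp add: funpow_Suc_right del: funpow.simps)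
  from Suc.IH[OF this] have IH: "Phi k = matpow B N *v s + (\<Sum>j<N. matpow B j *v dig ((Phi^^j) (Phi k)))" .
  have "k = dig k + B *v Phi k" by (rule dig_props(2))
  also have "\<dots> = matpow B (Suc N) *v s + (dig k + (\<Sum>j<N. matpow B (Suc j) *v dig ((Phi^^j) (Phi k))))"
  proof -
    have "dig k + B *v Phi k = dig k + B *v (matpow B N *v s + (\<Sum>j<N. matpow B j *v dig ((Phi^^j) (Phi k))))"
      by (rule arg_cong[where f="\<lambda>z. dig k + B *v z"], rule IH)
    also have "\<dots> = matpow B (Suc N) *v s + (dig k + (\<Sum>j<N. matpow B (Suc j) *v dig ((Phi^^j) (Phi k))))"
      by (simp only: mp_suc_mv matrix_vector_right_distrib mv_sum add_ac)
    finally show ?thesis .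
  qed
  also have "\<dots> = matpow B (Suc N) *v s + (\<Sum>j<Suc N. matpow B j *v dig ((Phi^^j) k))"
    unfolding sum.lessThan_Suc_shift
    by (simp only: matpow.simps(1) matrix_vector_mul_lid funpow_0 funpow_Suc_right o_apply)
  finally show ?case .
qed

end


hide_const (open) Lattice.lattice

lemma of_int_inj_rnf: "(of_int x :: 'a::real_normed_field) = of_int y \<Longrightarrow> x = y"
  by (metis of_int_eq_iff of_real_eq_iff of_real_of_int_eq)

theorem mainTheorem9:
  fixes M A :: "'a::real_normed_field^'n^'n"
  assumes "invertible M"
    and "dilation_for M A"
  defines "D \<equiv> {A *v y | y. y \<in> fund_dom M} \<inter> lattice M"
  shows "\<exists>S. finite S \<and> S \<subseteq> lattice M \<and>
    (\<forall>x\<in>lattice M.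
       (\<exists>N d. (\<forall>j\<le>N. d j \<in> D) \<and> x = (\<Sum>j\<le>N. matpow A j *v d j))
       \<noteq>
       (\<exists>N s d. s \<in> S \<and> (\<forall>j<N. d j \<in> D) \<and>
          x = matpow A N *v s + (\<Sum>j<N. matpow A j *v d j)))"
proof -
  from assms(2) obtain B where dil: "int_dilation B" and MAM: "matrix_inv M ** A ** M = map_matrix of_int B"
    unfolding dilation_for_def by blast
  interpret digsys B by unfold_locales (rule dil)
  note Mi = minv[OF assms(1)]
  define Bc :: "'a^'n^'n" where "Bc = map_matrix of_int B"
  define ia :: "int^'n \<Rightarrow> 'a^'n" where "ia k = (\<chi> i. of_int (k$i))" for k
  define phi where "phi k = M *v ia k" for k
  have A_eq: "A = M ** Bc ** matrix_inv M"
  proof -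
    have "M ** Bc ** matrix_inv M = M ** (matrix_inv M ** A ** M) ** matrix_inv M" by (simp add: MAM Bc_def)
    also have "\<dots> = (M ** matrix_inv M) ** A ** (M ** matrix_inv M)" by (simp add: matrix_mul_assoc)
    also have "\<dots> = A" using Mi by simp
    finally show ?thesis by simp
  qed
  have ia_mv: "Bc *v ia m = ia (B *v m)" for m
    by (rule cvec_eqI) (simp add: ia_def Bc_def matrix_vector_mult_def)
  have phiA: "A *v phi k = phi (B *v k)" for k
  proof -
    have "A *v phi k = M *v (Bc *v ((matrix_inv M ** M) *v ia k))"
      by (simp add: A_eq phi_def matrix_vector_mul_assoc matrix_mul_assoc)
    also have "\<dots> = phi (B *v k)" using Mi by (simp add: ia_mv phi_def)
    finally show ?thesis .
  qed
  have Apow: "matpow A j *v phi k = phi (matpow B j *v k)" for j k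
  proof (induction j)
    case 0 show ?case by simp
  next
    case (Suc j)
    have "matpow A (Suc j) *v phi k = A *v (matpow A j *v phi k)" by (simp add: matrix_vector_mul_assoc)
    also have "\<dots> = phi (B *v (matpow B j *v k))" using Suc by (simp add: phiA)
    also have "\<dots> = phi (matpow B (Suc j) *v k)" by (simp add: matrix_vector_mul_assoc)
    finally show ?case .
  qed
  have ia_add: "ia (a + b) = ia a + ia b" for a b by (rule cvec_eqI) (simp add: ia_def)
  have ia_0: "ia 0 = 0" by (rule cvec_eqI) (simp add: ia_def)
  have phi_add: "phi (a + b) = phi a + phi b" for a b by (simp add: phi_def ia_add matrix_vector_right_distrib)
  have phi_0: "phi 0 = 0" by (simp add: phi_def ia_0)
  have phi_sum: "phi (\<Sum>j\<in>J. f j) = (\<Sum>j\<in>J. phi (f j))" if "finite J" for J and f :: "nat \<Rightarrow> int^'n"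
    using that by (induction J rule: finite_induct) (simp_all add: phi_0 phi_add)
  have sum_conv: "(\<Sum>j\<in>J. matpow A j *v phi (f j)) = phi (\<Sum>j\<in>J. matpow B j *v f j)"
    if "finite J" for J and f :: "nat \<Rightarrow> int^'n"
    using that by (simp add: phi_sum Apow)
  have ia_inj: "ia a = ia b \<Longrightarrow> a = b" for a b
  proof (rule cvec_eqI)
    fix i assume "ia a = ia b"
    hence "(of_int (a$i) :: 'a) = of_int (b$i)" by (simp add: ia_def Finite_Cartesian_Product.vec_eq_iff)
    thus "a$i = b$i" by (rule of_int_inj_rnf)
  qed
  have phi_inj: "phi a = phi b \<Longrightarrow> a = b" for a b
  proof -
    assume "phi a = phi b"
    hence "matrix_inv M *v phi a = matrix_inv M *v phi b" by simp
    hence "ia a = ia b" using Mi by (simp add: phi_def matrix_vector_mul_assoc)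
    thus "a = b" by (rule ia_inj)
  qed
  have lat: "lattice M = range phi"
  proof safe
    fix x assume "x \<in> lattice M"
    then obtain k where "x = M *v (\<chi> i. of_int (k i))" unfolding Defs.lattice_def by blast
    hence "x = phi (vec_lambda k)" by (simp add: phi_def ia_def)
    thus "x \<in> range phi" by blast
  next
    fix k show "phi k \<in> lattice M" unfolding Defs.lattice_def phi_def ia_def by blast
  qed
  have real_emb: "Bc *v (\<chi> i. of_real (t$i)) = (\<chi> i. of_real ((Br *v t)$i))" for t
    by (rule cvec_eqI) (simp add: Bc_def Br_def matrix_vector_mult_def)
  have ia_real: "ia k = (\<chi> i. of_real (rv k $ i))" for k
    by (rule cvec_eqI) (simp add: ia_def rv_def)
  have Ay: "A *v (M *v v) = M *v (Bc *v v)" for v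
  proof -
    have "A *v (M *v v) = M *v (Bc *v ((matrix_inv M ** M) *v v))"
      by (simp add: A_eq matrix_vector_mul_assoc matrix_mul_assoc)
    thus ?thesis using Mi by simp
  qed
  have D_eq: "D = phi ` Dz"
  proof safe
    fix x assume "x \<in> D"
    then obtain y k where y: "y \<in> fund_dom M" and xy: "x = A *v y" and xk: "x = phi k"
      unfolding D_def lat by blast
    from y obtain t where t: "\<forall>i. -1/2 \<le> t i \<and> t i < 1/2" and yt: "y = M *v (\<chi> i. of_real (t i))"
      unfolding fund_dom_def by blast
    define tv :: "real^'n" where "tv = (\<chi> i. t i)"
    have "M *v (Bc *v (\<chi> i. of_real (tv$i))) = M *v ia k"
      using xy xk yt Ay by (simp add: tv_def phi_def)
    hence "matrix_inv M *v (M *v (Bc *v (\<chi> i. of_real (tv$i)))) = matrix_inv M *v (M *v ia k)" by simp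
    hence "Bc *v (\<chi> i. of_real (tv$i)) = ia k" using Mi by (simp add: matrix_vector_mul_assoc matrix_mul_assoc)
    hence "(\<chi> i. (of_real ((Br *v tv)$i) :: 'a)) = (\<chi> i. of_real (rv k $ i))" by (simp add: real_emb ia_real)
    hence "Br *v tv = rv k" by (simp add: Finite_Cartesian_Product.vec_eq_iff)
    moreover have "\<forall>i. -1/2 \<le> tv$i \<and> tv$i < 1/2" using t by (simp add: tv_def)
    ultimately have "k \<in> Dz" unfolding Dz_def by blast
    thus "x \<in> phi ` Dz" using xk by blast
  next
    fix k assume "k \<in> Dz"
    then obtain t where t: "\<forall>i. -1/2 \<le> t$i \<and> t$i < 1/2" and bt: "Br *v t = rv k" unfolding Dz_def by blast
    define y where "y = M *v (\<chi> i. of_real (t$i))"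
    have "y \<in> fund_dom M" unfolding fund_dom_def y_def using t by blast
    moreover have "A *v y = phi k" unfolding y_def Ay real_emb bt phi_def ia_real ..
    ultimately have "phi k \<in> {A *v y | y. y \<in> fund_dom M}"
      by (intro CollectI exI[of _ y]) simp
    thus "phi k \<in> D" unfolding D_def lat by simp
  qed
  obtain P where finP: "finite P" and xor: "\<And>k. (\<exists>a. (Phi^^a) k = 0) \<noteq> (\<exists>N. (Phi^^N) k \<in> P)"
    using dichotomy by blast
  have sel: "\<exists>dz. \<forall>j\<in>J. dz j \<in> Dz \<and> d j = phi (dz j)" if "\<forall>j\<in>J. d j \<in> D" for J and d :: "nat \<Rightarrow> 'a^'n"
  proof -
    have "\<forall>j\<in>J. \<exists>e. e \<in> Dz \<and> d j = phi e" using that unfolding D_eq by blast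
    thus ?thesis by metis
  qed
  have c1: "(\<exists>N d. (\<forall>j\<le>N. d j \<in> D) \<and> phi k = (\<Sum>j\<le>N. matpow A j *v d j)) \<longleftrightarrow> (\<exists>a. (Phi^^a) k = 0)" for k
  proof
    assume "\<exists>N d. (\<forall>j\<le>N. d j \<in> D) \<and> phi k = (\<Sum>j\<le>N. matpow A j *v d j)"
    then obtain N d where d: "\<forall>j\<le>N. d j \<in> D" and e: "phi k = (\<Sum>j\<le>N. matpow A j *v d j)" by blast
    from sel[of "{..N}" d] d obtain dz where dz: "\<forall>j\<in>{..N}. dz j \<in> Dz \<and> d j = phi (dz j)" by auto
    have "phi k = (\<Sum>j\<le>N. matpow A j *v phi (dz j))" using e dz by simp
    also have "\<dots> = phi (\<Sum>j\<le>N. matpow B j *v dz j)" by (rule sum_conv) simp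
    finally have "k = (\<Sum>j\<le>N. matpow B j *v dz j)" by (rule phi_inj)
    hence "k = matpow B (Suc N) *v 0 + (\<Sum>j<Suc N. matpow B j *v dz j)" by (simp add: lessThan_Suc_atMost)
    hence "(Phi^^Suc N) k = 0" using dz by (intro expand1) auto
    thus "\<exists>a. (Phi^^a) k = 0" by blast
  next
    assume "\<exists>a. (Phi^^a) k = 0"
    then obtain a where a: "(Phi^^a) k = 0" by blast
    from expand2[OF a] have ka: "k = (\<Sum>j<a. matpow B j *v dig ((Phi^^j) k))" by simp
    show "\<exists>N d. (\<forall>j\<le>N. d j \<in> D) \<and> phi k = (\<Sum>j\<le>N. matpow A j *v d j)"
    proof (cases a)
      case 0
      hence "k = 0" using ka by simp
      moreover have "phi 0 \<in> D" unfolding D_eq using zero_Dz by blast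
      ultimately show ?thesis using phi_0
        by (intro exI[of _ 0] exI[of _ "\<lambda>_. 0"]) simp
    next
      case (Suc N)
      have "phi k = (\<Sum>j\<le>N. matpow A j *v phi (dig ((Phi^^j) k)))"
        using ka Suc by (simp add: sum_conv lessThan_Suc_atMost)
      moreover have "\<forall>j\<le>N. phi (dig ((Phi^^j) k)) \<in> D" unfolding D_eq using dig_props(1) by blast
      ultimately show ?thesis
        by (intro exI[of _ N] exI[of _ "\<lambda>j. phi (dig ((Phi^^j) k))"] conjI) auto
    qed
  qed
  have c2: "(\<exists>N s d. s \<in> phi ` P \<and> (\<forall>j<N. d j \<in> D) \<and> phi k = matpow A N *v s + (\<Sum>j<N. matpow A j *v d j))
      \<longleftrightarrow> (\<exists>N. (Phi^^N) k \<in> P)" for k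
  proof
    assume "\<exists>N s d. s \<in> phi ` P \<and> (\<forall>j<N. d j \<in> D) \<and> phi k = matpow A N *v s + (\<Sum>j<N. matpow A j *v d j)"
    then obtain N p d where p: "p \<in> P" and d: "\<forall>j<N. d j \<in> D"
      and e: "phi k = matpow A N *v phi p + (\<Sum>j<N. matpow A j *v d j)" by blast
    from sel[of "{..<N}" d] d obtain dz where dz: "\<forall>j\<in>{..<N}. dz j \<in> Dz \<and> d j = phi (dz j)" by auto
    have "phi k = matpow A N *v phi p + (\<Sum>j<N. matpow A j *v phi (dz j))" using e dz by simp
    also have "\<dots> = phi (matpow B N *v p + (\<Sum>j<N. matpow B j *v dz j))"
      by (simp add: sum_conv Apow phi_add phi_sum)
    finally have "k = matpow B N *v p + (\<Sum>j<N. matpow B j *v dz j)" by (rule phi_inj)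
    hence "(Phi^^N) k = p" using dz by (intro expand1) auto
    thus "\<exists>N. (Phi^^N) k \<in> P" using p by blast
  next
    assume "\<exists>N. (Phi^^N) k \<in> P"
    then obtain N where p: "(Phi^^N) k \<in> P" by blast
    have ke: "k = matpow B N *v (Phi^^N) k + (\<Sum>j<N. matpow B j *v dig ((Phi^^j) k))"
      by (rule expand2) (rule refl)
    have "phi k = matpow A N *v phi ((Phi^^N) k) + (\<Sum>j<N. matpow A j *v phi (dig ((Phi^^j) k)))"
      by (subst ke) (simp add: sum_conv Apow phi_add phi_sum)
    moreover have "\<forall>j<N. phi (dig ((Phi^^j) k)) \<in> D" unfolding D_eq using dig_props(1) by blast
    moreover have "phi ((Phi^^N) k) \<in> phi ` P" using p by blast
    ultimately show "\<exists>N s d. s \<in> phi ` P \<and> (\<forall>j<N. d j \<in> D) \<and> phi k = matpow A N *v s + (\<Sum>j<N. matpow A j *v d j)"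
      by (intro exI[of _ N] exI[of _ "phi ((Phi^^N) k)"] exI[of _ "\<lambda>j. phi (dig ((Phi^^j) k))"] conjI) auto
  qed
  show ?thesis
  proof (intro exI[of _ "phi ` P"] conjI ballI)
    show "finite (phi ` P)" using finP by simp
    show "phi ` P \<subseteq> lattice M" unfolding lat by blast
    fix x assume "x \<in> lattice M"
    then obtain k where xk: "x = phi k" unfolding lat by blast
    show "(\<exists>N d. (\<forall>j\<le>N. d j \<in> D) \<and> x = (\<Sum>j\<le>N. matpow A j *v d j)) \<noteq>
       (\<exists>N s d. s \<in> phi ` P \<and> (\<forall>j<N. d j \<in> D) \<and> x = matpow A N *v s + (\<Sum>j<N. matpow A j *v d j))"
      unfolding xk c1 c2 by (rule xor)
  qed
qed


end
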